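(* Fix $1<p<\infty$. Fix natural numbers $l_1,\dots,l_{d+1}$, let $L=\prod_{i=1}^{d+1}l_i$ and let $T=\bigcup_{i=0}^{d+1}\Lambda_i$ be an $(l_1,\dots,l_{d+1})$ interval tree. Suppose $0<\Delta,\mu<1$, $0<\nu<1$, $\Theta>0$, $M>1$, $m\in\mathbb{N}$, $\lambda>0$, and $(s_I)_{I\in T}\subset(0,\infty)$ are such that (i) for each $I\in T\setminus\Lambda_{d+1}$, $s_I\le\sum_{J^-=I}s_J$; (ii) for all $0\le j\le d$, $\max_{I\in\Lambda_j}s_I\le M\min_{I\in\Lambda_j}s_I$; (iii) $s_{[L]}^p>(1-\nu/2)\frac{\Theta^p}{\lambda^p}\bigl(\prod_{i=1}^{d+1}l_i^{p-1}\bigr)\sum_{I\in\Lambda_{d+1}}s_I^p$; (iv) $(1-\mu\Delta/M^p)^m<(1-\nu/2)\frac{\Theta^p}{\lambda^p}$. For each $0\le j<d$ let $I_j=\{I\in\Lambda_j: s_I^p\le(1-\mu)l_{j+1}^{p-1}\sum_{J^-=I}s_J^p\}$ and let $B=\{j<d:|I_j|\ge\Delta|\Lambda_j|\}$. Then $|B|\le m$.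
   Context: $[n]=\{1,\dots,n\}$. Given natural numbers $l_1,\dots,l_{k}$ with $L=\prod_{j=1}^{k}l_j$, an $(l_1,\dots,l_k)$ interval tree $T=\bigcup_{i=0}^k\Lambda_i$ is built as follows: $\Lambda_0=\{[L]\}$; if $\Lambda_i$ ($i<k$) consists of pairwise disjoint integer subintervals of $[L]$ each of cardinality $\prod_{j=i+1}^k l_j$, then each $I\in\Lambda_i$ is partitioned into $l_{i+1}$ integer subintervals of equal cardinality, and $\Lambda_{i+1}$ is the set of all these subintervals over all $I\in\Lambda_i$. For $0<j\le k$ and $J\in\Lambda_j$, $J^-$ denotes the unique $I\in\Lambda_{j-1}$ with $J\subset I$; sums $\sum_{J^-=I}$ range over the children of $I$. *)

theory Defs
  imports Complex_Main
begin

definition split_interval :: "nat \<Rightarrow> nat set \<Rightarrow> nat set set" where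
  "split_interval n I =
     (\<lambda>t. {Min I + t * (card I div n) ..< Min I + (t + 1) * (card I div n)}) ` {..<n}"

text \<open>Level i of the (l 1, ..., l k) interval tree on [L] = {1..L}, L = l 1 * ... * l k
  (meaningful for i \<le> k).\<close>
primrec Lambda :: "(nat \<Rightarrow> nat) \<Rightarrow> nat \<Rightarrow> nat \<Rightarrow> nat set set" where
  "Lambda l L 0 = {{1..L}}"
| "Lambda l L (Suc i) = (\<Union>I\<in>Lambda l L i. split_interval (l (Suc i)) I)"

text \<open>Children J (with J^- = I) of I \<in> Lambda_j: the elements of Lambda_{j+1} contained in I.\<close>
definition children :: "(nat \<Rightarrow> nat) \<Rightarrow> nat \<Rightarrow> nat \<Rightarrow> nat set \<Rightarrow> nat set set" where
  "children l L j I = {J \<in> Lambda l L (Suc j). J \<subseteq> I}"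

end

theory Submission
  imports Defs "HOL-Analysis.Analysis"
begin

lemma powmean:
  fixes f :: "'a \<Rightarrow> real"
  assumes "finite C" "C \<noteq> {}" "\<And>J. J \<in> C \<Longrightarrow> f J > 0" "p \<ge> 1"
  shows "(\<Sum>J\<in>C. f J) powr p \<le> real (card C) powr (p - 1) * (\<Sum>J\<in>C. f J powr p)"
proof -
  define n where "n = real (card C)"
  have n: "n > 0" using assms by (simp add: n_def card_gt_0_iff)
  have "(\<lambda>x. x powr p) (\<Sum>J\<in>C. (1/n) *\<^sub>R f J) \<le> (\<Sum>J\<in>C. (1/n) * (\<lambda>x. x powr p) (f J))"
    by (rule convex_on_sum[OF assms(1,2) powr_convex[OF assms(4)]]) (use assms n in \<open>auto simp: n_def\<close>)
  hence "((\<Sum>J\<in>C. f J) / n) powr p \<le> (\<Sum>J\<in>C. f J powr p) / n"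
    by (simp add: sum_divide_distrib[symmetric] sum_distrib_left[symmetric])
  moreover have "((\<Sum>J\<in>C. f J) / n) powr p = (\<Sum>J\<in>C. f J) powr p / n powr p"
    using n assms by (simp add: powr_divide sum_nonneg less_imp_le)
  ultimately have "(\<Sum>J\<in>C. f J) powr p \<le> n powr p * ((\<Sum>J\<in>C. f J powr p) / n)"
    using n by (simp add: divide_le_eq mult.commute)
  also have "\<dots> = n powr (p - 1) * (\<Sum>J\<in>C. f J powr p)"
    using n by (simp add: powr_diff)
  finally show ?thesis by (simp add: n_def)
qed

lemma split_eq:
  assumes "n \<ge> 1" "N \<ge> 1"
  shows "split_interval n {a..<a+n*N} = (\<lambda>t. {a + t*N ..< a + (t+1)*N}) ` {..<n}"
proof -
  have "Min {a..<a+n*N} = a" using assms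
    by (intro Min_eqI) auto
  then show ?thesis using assms by (simp add: split_interval_def)
qed



lemma Nrec:
  assumes "j \<le> d"
  shows "(\<Prod>i=Suc j..d+1. l i) = l (Suc j) * (\<Prod>i=Suc (Suc j)..d+1. (l i::nat))"
  by (rule prod.atLeast_Suc_atMost) (use assms in simp)

lemma Npos:
  assumes "\<forall>i\<in>{1..d+1}. 1 \<le> l i"
  shows "(\<Prod>i=Suc j..d+1. (l i::nat)) \<ge> 1"
  using assms by (intro prod_ge_1) auto

lemma Lambda_struct:
  assumes hl: "\<forall>i\<in>{1..d+1}. 1 \<le> l i" and hL: "L = (\<Prod>i=1..d+1. l i)" and "j \<le> d+1"
  shows "finite (Lambda l L j) \<and> Lambda l L j \<noteq> {}
    \<and> (\<forall>I\<in>Lambda l L j. \<exists>a. I = {a..<a + (\<Prod>i=Suc j..d+1. l i)})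
    \<and> (\<forall>I\<in>Lambda l L j. \<forall>I'\<in>Lambda l L j. I \<noteq> I' \<longrightarrow> I \<inter> I' = {})"
  using assms(3)
proof (induction j)
  case 0
  have "{1..L} = {1..<1+L}" by auto
  moreover have "L = (\<Prod>i=Suc 0..d+1. l i)" using hL by simp
  ultimately have "\<exists>a. {1..L} = {a..<a + (\<Prod>i=Suc 0..d+1. l i)}" by metis
  then show ?case by simp
next
  case (Suc j)
  define N where "N = (\<Prod>i=Suc (Suc j)..d+1. l i)"
  define n where "n = l (Suc j)"
  have N1: "N \<ge> 1" unfolding N_def using Npos[OF hl] by simp
  have n1: "n \<ge> 1" unfolding n_def using hl Suc.prems by auto
  have rec: "(\<Prod>i=Suc j..d+1. l i) = n * N" unfolding n_def N_def using Suc.prems Nrec by auto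
  from Suc.IH Suc.prems have IH: "finite (Lambda l L j)" "Lambda l L j \<noteq> {}"
    "\<And>I. I\<in>Lambda l L j \<Longrightarrow> \<exists>a. I = {a..<a + n*N}"
    "\<And>I I'. I\<in>Lambda l L j \<Longrightarrow> I'\<in>Lambda l L j \<Longrightarrow> I \<noteq> I' \<Longrightarrow> I \<inter> I' = {}"
    using rec by auto
  have sp: "split_interval (l (Suc j)) I = (\<lambda>t. {a + t*N ..< a + (t+1)*N}) ` {..<n}"
    if "I = {a..<a+n*N}" for I a using split_eq[OF n1 N1] that n_def by simp
  have fin: "finite (Lambda l L (Suc j))"
    using IH(1) by (simp add: split_interval_def)
  have ne: "Lambda l L (Suc j) \<noteq> {}"
    using IH(2) n1 by (auto simp: split_interval_def n_def lessThan_empty_iff)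
  have form: "\<exists>a. J = {a..<a + N}" if "J \<in> Lambda l L (Suc j)" for J
  proof -
    from that obtain I where I: "I \<in> Lambda l L j" "J \<in> split_interval (l (Suc j)) I" by auto
    from IH(3)[OF I(1)] obtain a where a: "I = {a..<a+n*N}" by auto
    from I(2) sp[OF a] obtain t where "J = {a + t*N ..< a + (t+1)*N}" by auto
    then show ?thesis by (intro exI[of _ "a + t*N"]) (simp add: algebra_simps)
  qed
  have disj: "J \<inter> J' = {}" if "J \<in> Lambda l L (Suc j)" "J' \<in> Lambda l L (Suc j)" "J \<noteq> J'" for J J'
  proof -
    from that obtain I where I: "I \<in> Lambda l L j" "J \<in> split_interval (l (Suc j)) I" by auto
    from that obtain I' where I': "I' \<in> Lambda l L j" "J' \<in> split_interval (l (Suc j)) I'" by auto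
    from IH(3)[OF I(1)] obtain a where a: "I = {a..<a+n*N}" by auto
    from IH(3)[OF I'(1)] obtain a' where a': "I' = {a'..<a'+n*N}" by auto
    from I(2) sp[OF a] obtain t where t: "t < n" "J = {a + t*N ..< a + (t+1)*N}" by auto
    from I'(2) sp[OF a'] obtain t' where t': "t' < n" "J' = {a' + t'*N ..< a' + (t'+1)*N}" by auto
    have sub: "J \<subseteq> I" "J' \<subseteq> I'"
    proof -
      have "(t+1)*N \<le> n*N" "(t'+1)*N \<le> n*N" using t t' by (metis Suc_eq_plus1 Suc_leI mult_le_mono1)+
      then show "J \<subseteq> I" "J' \<subseteq> I'" unfolding t(2) t'(2) a a' by (simp_all only: ivl_subset) linarith+
    qed
    show ?thesis
    proof (cases "I = I'")
      case False
      then show ?thesis using IH(4)[OF I(1) I'(1)] sub by blast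
    next
      case True
      then have "a = a'" using a a' N1 n1
        by (metis atLeastLessThan_inj(1) less_add_same_cancel1 nat_0_less_mult_iff less_le_trans zero_less_one)
      then have "t \<noteq> t'" using t t' that(3) by auto
      then have "(t+1)*N \<le> t'*N \<or> (t'+1)*N \<le> t*N"
        by (metis Suc_eq_plus1 linorder_neqE_nat mult_le_mono1 Suc_leI)
      note dd = this
      show ?thesis
      proof (rule ccontr)
        assume "J \<inter> J' \<noteq> {}"
        then obtain x where x: "x \<in> J" "x \<in> J'" by blast
        have "a+t*N \<le> x" "x < a+(t+1)*N" using x(1) unfolding t(2) by (simp_all only: atLeastLessThan_iff)
        moreover have "a+t'*N \<le> x" "x < a+(t'+1)*N" using x(2) unfolding t'(2) \<open>a = a'\<close> by (simp_all only: atLeastLessThan_iff)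
        ultimately show False using dd by linarith
      qed
    qed
  qed
  have form': "\<forall>J\<in>Lambda l L (Suc j). \<exists>a. J = {a..<a + (\<Prod>i=Suc (Suc j)..d+1. l i)}"
    using form unfolding N_def by blast
  have disj': "\<forall>J\<in>Lambda l L (Suc j). \<forall>J'\<in>Lambda l L (Suc j). J \<noteq> J' \<longrightarrow> J \<inter> J' = {}"
    using disj by blast
  show ?case using fin ne form' disj' by (intro conjI)
qed



lemma alg:
  fixes A S T P \<mu> \<Delta> :: real
  assumes "A \<le> S - \<mu>*T" "\<Delta>*A \<le> P*((1-\<mu>)*T)" "P > 1" "0<\<mu>" "\<mu><1" "0<\<Delta>" "\<Delta><1" "T\<ge>0" "A\<ge>0"
  shows "A \<le> (1 - \<mu>*\<Delta>/P) * S"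
proof -
  have x1: "\<mu>*\<Delta>/P \<le> \<mu>" using assms
    by (simp add: divide_le_eq)
  have x0: "\<mu>*\<Delta>/P \<ge> 0" using assms by simp
  have "\<mu>*\<Delta>/P * A = \<mu> * ((\<Delta>*A)/P)" by simp
  also have "(\<Delta>*A)/P \<le> (1-\<mu>)*T" using assms by (simp add: divide_le_eq mult.commute)
  hence "\<mu> * ((\<Delta>*A)/P) \<le> \<mu> * ((1-\<mu>)*T)" using assms by (intro mult_left_mono) auto
  also have "\<mu> * ((1-\<mu>)*T) \<le> \<mu> * ((1-\<mu>*\<Delta>/P)*T)" using x1 assms by (intro mult_left_mono mult_right_mono) auto
  finally have k: "\<mu>*\<Delta>/P * A \<le> \<mu> * ((1-\<mu>*\<Delta>/P)*T)" .
  have "(1 - \<mu>*\<Delta>/P) * (A + \<mu>*T) \<le> (1 - \<mu>*\<Delta>/P) * S"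
  proof -
    have "\<mu>*\<Delta> \<le> \<mu>*1" using assms by (intro mult_left_mono) auto
    hence "\<mu>*\<Delta> \<le> P" using assms by linarith
    hence "1 - \<mu>*\<Delta>/P \<ge> 0" using assms by (simp add: divide_le_eq)
    thus ?thesis using assms by (intro mult_left_mono) auto
  qed
  moreover have "\<And>x::real. (1 - x) * (A + \<mu>*T) = A - x * A + \<mu> * ((1-x)*T)"
    by (simp add: algebra_simps)
  hence "(1 - \<mu>*\<Delta>/P) * (A + \<mu>*T) = A - \<mu>*\<Delta>/P * A + \<mu> * ((1-\<mu>*\<Delta>/P)*T)" .
  ultimately show ?thesis using k by linarith
qed



lemma piece_sub:
  assumes "n \<ge> 1" "N \<ge> 1" "J \<in> split_interval n {a..<a+n*N}"
  shows "J \<subseteq> {a..<a+n*N} \<and> J \<noteq> {}"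
proof -
  from assms obtain t where t: "t < n" "J = {a + t*N ..< a + (t+1)*N}"
    using split_eq[OF assms(1,2)] by auto
  have "(t+1)*N \<le> n*N" using t by (metis Suc_eq_plus1 Suc_leI mult_le_mono1)
  moreover have "a + t*N < a + (t+1)*N" using assms(2) by simp
  ultimately show ?thesis unfolding t(2) by (simp only: ivl_subset atLeastLessThan_empty_iff not_not simp_thms) linarith
qed

lemma step:
  fixes p :: real and s :: "nat set \<Rightarrow> real" and \<mu> \<Delta> M :: real
  assumes hp: "1 < p"
    and hl: "\<forall>i\<in>{1..d+1}. 1 \<le> l i"
    and hL: "L = (\<Prod>i=1..d+1. l i)"
    and hj: "j \<le> d"
    and hDelta: "0 < \<Delta>" "\<Delta> < 1"
    and hmu: "0 < \<mu>" "\<mu> < 1"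
    and hM: "M > 1"
    and hs: "\<forall>j\<le>d+1. \<forall>I\<in>Lambda l L j. s I > 0"
    and i: "\<forall>j\<le>d. \<forall>I\<in>Lambda l L j. I \<notin> Lambda l L (d+1) \<longrightarrow>
              s I \<le> (\<Sum>J\<in>children l L j I. s J)"
    and ii: "\<forall>j\<le>d. Max (s ` Lambda l L j) \<le> M * Min (s ` Lambda l L j)"
  shows "(\<Sum>I\<in>Lambda l L j. s I powr p) \<le> real (l (j+1)) powr (p - 1) * (\<Sum>I\<in>Lambda l L (Suc j). s I powr p)
    \<and> (real (card {I\<in>Lambda l L j. s I powr p \<le>
                 (1 - \<mu>) * real (l (j+1)) powr (p - 1) * (\<Sum>J\<in>children l L j I. s J powr p)})
           \<ge> \<Delta> * real (card (Lambda l L j)) \<longrightarrow>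
      (\<Sum>I\<in>Lambda l L j. s I powr p) \<le> (1 - \<mu>*\<Delta>/M powr p) * (real (l (j+1)) powr (p - 1) * (\<Sum>I\<in>Lambda l L (Suc j). s I powr p)))"
proof -
  define \<Lambda> where "\<Lambda> = Lambda l L j"
  define \<Lambda>' where "\<Lambda>' = Lambda l L (Suc j)"
  define ch where "ch = children l L j"
  define q where "q = real (l (j+1)) powr (p - 1)"
  define N where "N = (\<Prod>i=Suc (Suc j)..d+1. l i)"
  define n where "n = l (Suc j)"
  have N1: "N \<ge> 1" unfolding N_def using Npos[OF hl] by simp
  have n1: "n \<ge> 1" unfolding n_def using hl hj by auto
  have rec: "(\<Prod>i=Suc j..d+1. l i) = n * N" unfolding n_def N_def using hj Nrec by auto
  have S1: "finite \<Lambda>" "\<Lambda> \<noteq> {}" "\<And>I. I\<in>\<Lambda> \<Longrightarrow> \<exists>a. I = {a..<a + n*N}"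
    "\<And>I I'. I\<in>\<Lambda> \<Longrightarrow> I'\<in>\<Lambda> \<Longrightarrow> I \<noteq> I' \<Longrightarrow> I \<inter> I' = {}"
    using Lambda_struct[OF hl hL, of j] hj rec unfolding \<Lambda>_def by auto
  have S2: "finite \<Lambda>'" "\<And>J. J\<in>\<Lambda>' \<Longrightarrow> \<exists>a. J = {a..<a + N}"
    using Lambda_struct[OF hl hL, of "Suc j"] hj unfolding \<Lambda>'_def N_def by auto
  have hj1: "j \<le> d+1" "Suc j \<le> d+1" using hj by simp_all
  have hs1: "\<forall>I\<in>Lambda l L j. s I > 0" using hs[rule_format, OF hj1(1)] by blast
  have hs2: "\<forall>I\<in>Lambda l L (Suc j). s I > 0" using hs[rule_format, OF hj1(2)] by blast
  have spos: "\<And>I. I \<in> \<Lambda> \<Longrightarrow> s I > 0" "\<And>J. J \<in> \<Lambda>' \<Longrightarrow> s J > 0"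
    using hs1 hs2 unfolding \<Lambda>_def \<Lambda>'_def by auto
  have chsub: "ch I \<subseteq> \<Lambda>'" for I unfolding ch_def children_def \<Lambda>'_def by auto
  have chfin: "finite (ch I)" for I using chsub S2(1) finite_subset by blast
  have chpar: "J \<subseteq> I" if "J \<in> ch I" for I J using that unfolding ch_def children_def by auto
  have Jne: "J \<noteq> {}" if "J \<in> \<Lambda>'" for J using S2(2)[OF that] N1 by auto
  have chsplit: "ch I \<subseteq> split_interval n I" if I: "I \<in> \<Lambda>" for I
  proof
    fix J assume J: "J \<in> ch I"
    then have J': "J \<in> \<Lambda>'" using chsub by auto
    then obtain I' where I': "I' \<in> \<Lambda>" "J \<in> split_interval n I'" unfolding \<Lambda>'_def \<Lambda>_def n_def by auto
    from S1(3)[OF I'(1)] obtain a where a: "I' = {a..<a+n*N}" by auto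
    have "J \<subseteq> I'" using piece_sub[OF n1 N1] I'(2) a by auto
    moreover have "J \<subseteq> I" using chpar J by auto
    ultimately have "I = I'" using S1(4)[OF I I'(1)] Jne[OF J'] by blast
    then show "J \<in> split_interval n I" using I' by simp
  qed
  have chcard: "card (ch I) \<le> n" if "I \<in> \<Lambda>" for I
  proof -
    have "card (ch I) \<le> card (split_interval n I)"
      using chsplit[OF that] by (intro card_mono) (auto simp: split_interval_def)
    also have "\<dots> \<le> n" unfolding split_interval_def using card_image_le[of "{..<n}"] by simp
    finally show ?thesis .
  qed
  have sI: "s I \<le> (\<Sum>J\<in>ch I. s J)" if I: "I \<in> \<Lambda>" for I
  proof (cases "I \<in> Lambda l L (d+1)")
    case False
    then show ?thesis using i hj I unfolding ch_def \<Lambda>_def by auto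
  next
    case True
    from S1(3)[OF I] obtain a where a: "I = {a..<a+n*N}" by auto
    from Lambda_struct[OF hl hL, of "d+1"] True have "\<exists>b. I = {b..<b + (\<Prod>i=Suc (d+1)..d+1. l i)}" by blast
    then obtain b where b: "I = {b..<b + (\<Prod>i=Suc (d+1)..d+1. l i)}" by blast
    have "card I = 1" unfolding b by simp
    moreover have "card I = n*N" unfolding a by simp
    ultimately have "n*N = 1" by simp
    hence nN: "n = 1" "N = 1" by auto
    have "split_interval n I = {I}" using split_eq[of n N a] nN a by auto
    hence "I \<in> \<Lambda>'" using I unfolding \<Lambda>'_def \<Lambda>_def n_def by auto
    hence "I \<in> ch I" unfolding ch_def children_def \<Lambda>'_def by auto
    moreover have "\<forall>J\<in>ch I. 0 \<le> s J" using chsub spos(2) by (meson less_imp_le subsetD)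
    ultimately show ?thesis using chfin[of I] by (intro member_le_sum) auto
  qed
  define X where "X I = q * (\<Sum>J\<in>ch I. s J powr p)" for I
  have q0: "q \<ge> 0" unfolding q_def by simp
  have X0: "X I \<ge> 0" for I unfolding X_def using q0 by (intro mult_nonneg_nonneg sum_nonneg) auto
  have sX: "s I powr p \<le> X I" if I: "I \<in> \<Lambda>" for I
  proof -
    have chne: "ch I \<noteq> {}" using sI[OF I] spos(1)[OF I] by auto
    have "s I powr p \<le> (\<Sum>J\<in>ch I. s J) powr p"
      using sI[OF I] spos(1)[OF I] hp by (intro powr_mono2) auto
    also have "\<dots> \<le> real (card (ch I)) powr (p - 1) * (\<Sum>J\<in>ch I. s J powr p)"
      using chfin chne spos(2) chsub hp by (intro powmean) auto
    also have "\<dots> \<le> q * (\<Sum>J\<in>ch I. s J powr p)"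
    proof (rule mult_right_mono)
      show "real (card (ch I)) powr (p - 1) \<le> q" unfolding q_def
        using chcard[OF I] hp n_def by (intro powr_mono2) auto
    qed (auto intro: sum_nonneg)
    finally show ?thesis unfolding X_def .
  qed
  have SX: "(\<Sum>I\<in>\<Lambda>. X I) \<le> q * (\<Sum>J\<in>\<Lambda>'. s J powr p)"
  proof -
    have "(\<Sum>I\<in>\<Lambda>. X I) = q * (\<Sum>I\<in>\<Lambda>. \<Sum>J\<in>ch I. s J powr p)"
      unfolding X_def by (simp add: sum_distrib_left)
    also have "(\<Sum>I\<in>\<Lambda>. \<Sum>J\<in>ch I. s J powr p) = (\<Sum>J\<in>\<Union>(ch ` \<Lambda>). s J powr p)"
    proof (rule sum.UNION_disjoint[symmetric])
      show "finite \<Lambda>" by (rule S1(1))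
      show "\<forall>i\<in>\<Lambda>. finite (ch i)" using chfin by auto
      show "\<forall>i\<in>\<Lambda>. \<forall>j\<in>\<Lambda>. i \<noteq> j \<longrightarrow> ch i \<inter> ch j = {}"
      proof (intro ballI impI)
        fix I I' assume h: "I \<in> \<Lambda>" "I' \<in> \<Lambda>" "I \<noteq> I'"
        show "ch I \<inter> ch I' = {}"
        proof (rule ccontr)
          assume "ch I \<inter> ch I' \<noteq> {}"
          then obtain J where J: "J \<in> ch I" "J \<in> ch I'" by blast
          then have "J \<subseteq> I \<inter> I'" using chpar by auto
          moreover have "J \<noteq> {}" using Jne chsub J by auto
          ultimately show False using S1(4)[OF h] by blast
        qed
      qed
    qed
    also have "\<dots> \<le> (\<Sum>J\<in>\<Lambda>'. s J powr p)"
      using chsub S2(1) by (intro sum_mono2) auto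
    finally show ?thesis using q0 by (simp add: mult_left_mono)
  qed
  have part1: "(\<Sum>I\<in>\<Lambda>. s I powr p) \<le> q * (\<Sum>J\<in>\<Lambda>'. s J powr p)"
    using sum_mono[of \<Lambda> "\<lambda>I. s I powr p" X] sX SX by force
  define Bd where "Bd = {I\<in>\<Lambda>. s I powr p \<le> (1 - \<mu>) * q * (\<Sum>J\<in>ch I. s J powr p)}"
  have part2: "(\<Sum>I\<in>\<Lambda>. s I powr p) \<le> (1 - \<mu>*\<Delta>/M powr p) * (q * (\<Sum>J\<in>\<Lambda>'. s J powr p))"
    if good: "real (card Bd) \<ge> \<Delta> * real (card \<Lambda>)"
  proof -
    define A where "A = (\<Sum>I\<in>\<Lambda>. s I powr p)"
    define T where "T = (\<Sum>I\<in>Bd. X I)"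
    define P where "P = M powr p"
    have BdL: "Bd \<subseteq> \<Lambda>" unfolding Bd_def by auto
    have finB: "finite Bd" using BdL S1(1) finite_subset by blast
    have T0: "T \<ge> 0" unfolding T_def using X0 by (intro sum_nonneg) auto
    have A0: "A \<ge> 0" unfolding A_def by (intro sum_nonneg) auto
    have P1: "P > 1" unfolding P_def using powr_less_mono2[of p 1 M] hM hp by simp
    have "A = (\<Sum>I\<in>Bd. s I powr p) + (\<Sum>I\<in>\<Lambda>-Bd. s I powr p)"
      unfolding A_def using S1(1) BdL by (metis sum.subset_diff add.commute)
    also have "(\<Sum>I\<in>Bd. s I powr p) \<le> (\<Sum>I\<in>Bd. (1-\<mu>) * X I)"
      by (intro sum_mono) (auto simp: Bd_def X_def mult.assoc)
    also have "(\<Sum>I\<in>\<Lambda>-Bd. s I powr p) \<le> (\<Sum>I\<in>\<Lambda>-Bd. X I)"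
      using sX by (intro sum_mono) auto
    also have "(\<Sum>I\<in>Bd. (1-\<mu>) * X I) + (\<Sum>I\<in>\<Lambda>-Bd. X I) = (\<Sum>I\<in>\<Lambda>. X I) - \<mu> * T"
    proof -
      have "(\<Sum>I\<in>\<Lambda>. X I) = T + (\<Sum>I\<in>\<Lambda>-Bd. X I)"
        unfolding T_def using S1(1) BdL by (metis sum.subset_diff add.commute)
      moreover have "(\<Sum>I\<in>Bd. (1-\<mu>) * X I) = (1-\<mu>) * T" unfolding T_def by (simp add: sum_distrib_left)
      ultimately show ?thesis by (simp add: algebra_simps)
    qed
    finally have c1: "A \<le> (\<Sum>I\<in>\<Lambda>. X I) - \<mu> * T" by simp
    define mn where "mn = Min (s ` \<Lambda>)"
    define mx where "mx = Max (s ` \<Lambda>)"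
    have mnpos: "mn > 0" unfolding mn_def using S1(1,2) spos(1) by (subst Min_gr_iff) auto
    have mnle: "mn \<le> s I" if "I \<in> \<Lambda>" for I unfolding mn_def using S1(1) that by auto
    have mxge: "s I \<le> mx" if "I \<in> \<Lambda>" for I unfolding mx_def using S1(1) that by auto
    have mxM: "mx \<le> M * mn" unfolding mx_def mn_def \<Lambda>_def using ii hj by auto
    have "(1-\<mu>) * T = (\<Sum>I\<in>Bd. (1-\<mu>) * X I)" unfolding T_def by (simp add: sum_distrib_left)
    also have "\<dots> \<ge> (\<Sum>I\<in>Bd. s I powr p)"
      by (intro sum_mono) (auto simp: Bd_def X_def mult.assoc)
    finally have c2: "(1-\<mu>) * T \<ge> (\<Sum>I\<in>Bd. s I powr p)" .
    have c3: "(\<Sum>I\<in>Bd. s I powr p) \<ge> real (card Bd) * mn powr p"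
      using mnle BdL mnpos hp by (intro sum_bounded_below powr_mono2) auto
    have c4: "A \<le> real (card \<Lambda>) * mx powr p"
      unfolding A_def using mxge spos(1) hp by (intro sum_bounded_above powr_mono2) (auto intro: less_imp_le)
    have "mx powr p \<le> (M * mn) powr p"
      using mxM hp spos(1) S1(2) mxge by (intro powr_mono2) (auto intro: order.trans[OF less_imp_le])
    also have "\<dots> = P * mn powr p" unfolding P_def using hM mnpos by (simp add: powr_mult)
    finally have c5: "mx powr p \<le> P * mn powr p" .
    have "\<Delta> * A \<le> \<Delta> * (real (card \<Lambda>) * (P * mn powr p))"
      using c4 c5 hDelta by (intro mult_left_mono order.trans[OF c4] mult_left_mono) auto
    also have "\<dots> = P * ((\<Delta> * real (card \<Lambda>)) * mn powr p)" by (simp add: algebra_simps)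
    also have "\<dots> \<le> P * (real (card Bd) * mn powr p)"
      using good P1 by (intro mult_left_mono mult_right_mono) auto
    also have "\<dots> \<le> P * ((1-\<mu>) * T)" using c2 c3 P1 by (intro mult_left_mono) auto
    finally have c6: "\<Delta> * A \<le> P * ((1-\<mu>) * T)" .
    have "A \<le> (1 - \<mu>*\<Delta>/P) * (\<Sum>I\<in>\<Lambda>. X I)"
      using alg[OF c1 c6 P1 hmu hDelta T0 A0] .
    also have "\<dots> \<le> (1 - \<mu>*\<Delta>/P) * (q * (\<Sum>J\<in>\<Lambda>'. s J powr p))"
    proof (rule mult_left_mono[OF SX])
      have "\<mu>*\<Delta> \<le> \<mu>*1" using hmu hDelta by (intro mult_left_mono) auto
      hence "\<mu>*\<Delta> \<le> P" using hmu P1 by linarith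
      thus "1 - \<mu>*\<Delta>/P \<ge> 0" using P1 by (simp add: divide_le_eq)
    qed
    finally show ?thesis unfolding A_def P_def .
  qed
  show ?thesis using part1 part2 unfolding Bd_def \<Lambda>_def \<Lambda>'_def q_def ch_def
    by (simp add: mult.assoc)
qed



theorem lemma3p5:
  fixes p :: real and d :: nat and l :: "nat \<Rightarrow> nat" and L :: nat
    and \<Delta> \<mu> \<nu> \<Theta> M lam :: real and m :: nat and s :: "nat set \<Rightarrow> real"
  assumes hp: "1 < p"
    and hl: "\<forall>i\<in>{1..d+1}. 1 \<le> l i"
    and hL: "L = (\<Prod>i=1..d+1. l i)"
    and hDelta: "0 < \<Delta>" "\<Delta> < 1"
    and hmu: "0 < \<mu>" "\<mu> < 1"
    and hnu: "0 < \<nu>" "\<nu> < 1"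
    and hTheta: "\<Theta> > 0" and hM: "M > 1" and hlam: "lam > 0"
    and hs: "\<forall>j\<le>d+1. \<forall>I\<in>Lambda l L j. s I > 0"
    and i: "\<forall>j\<le>d. \<forall>I\<in>Lambda l L j. I \<notin> Lambda l L (d+1) \<longrightarrow>
              s I \<le> (\<Sum>J\<in>children l L j I. s J)"
    and ii: "\<forall>j\<le>d. Max (s ` Lambda l L j) \<le> M * Min (s ` Lambda l L j)"
    and iii: "s {1..L} powr p > (1 - \<nu>/2) * (\<Theta> powr p / lam powr p)
               * (\<Prod>i=1..d+1. real (l i) powr (p - 1))
               * (\<Sum>I\<in>Lambda l L (d+1). s I powr p)"
    and iv: "(1 - \<mu> * \<Delta> / M powr p) ^ m < (1 - \<nu>/2) * (\<Theta> powr p / lam powr p)"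
  shows "card {j. j < d \<and>
           real (card {I\<in>Lambda l L j. s I powr p \<le>
                 (1 - \<mu>) * real (l (j+1)) powr (p - 1) * (\<Sum>J\<in>children l L j I. s J powr p)})
           \<ge> \<Delta> * real (card (Lambda l L j))} \<le> m"
proof -
  define A where "A k = (\<Sum>I\<in>Lambda l L k. s I powr p)" for k
  define q where "q i = real (l i) powr (p - 1)" for i
  define c where "c = 1 - \<mu>*\<Delta>/M powr p"
  define G where "G j = (real (card {I\<in>Lambda l L j. s I powr p \<le>
                 (1 - \<mu>) * real (l (j+1)) powr (p - 1) * (\<Sum>J\<in>children l L j I. s J powr p)})
           \<ge> \<Delta> * real (card (Lambda l L j)))" for j
  define S where "S k = {j. j < k \<and> j < d \<and> G j}" for k
  have P1: "M powr p > 1" using powr_less_mono2[of p 1 M] hM hp by simp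
  have c0: "0 \<le> c" "c \<le> 1"
  proof -
    have "\<mu>*\<Delta> \<le> \<mu>*1" using hmu hDelta by (intro mult_left_mono) auto
    hence "\<mu>*\<Delta> \<le> M powr p" using hmu P1 by linarith
    thus "0 \<le> c" unfolding c_def using P1 by (simp add: divide_le_eq)
    show "c \<le> 1" unfolding c_def using P1 hmu hDelta by simp
  qed
  have stp: "A j \<le> q (Suc j) * A (Suc j)" "G j \<Longrightarrow> A j \<le> c * (q (Suc j) * A (Suc j))"
    if "j \<le> d" for j
    using step[OF hp hl hL that hDelta hmu hM hs i ii] unfolding A_def q_def c_def G_def
    by simp_all
  have q0: "q i \<ge> 0" for i unfolding q_def by simp
  have A0: "A k \<ge> 0" for k unfolding A_def by (intro sum_nonneg) auto
  have ind: "A 0 \<le> c ^ card (S k) * (\<Prod>i=1..k. q i) * A k" if "k \<le> d+1" for k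
    using that
  proof (induction k)
    case 0
    have "S 0 = {}" unfolding S_def by auto
    then show ?case by simp
  next
    case (Suc k)
    then have k: "k \<le> d" by simp
    have IH: "A 0 \<le> c ^ card (S k) * (\<Prod>i=1..k. q i) * A k" using Suc by simp
    have Pk: "(\<Prod>i=1..k. q i) \<ge> 0" using q0 by (intro prod_nonneg) auto
    have cp: "c ^ card (S k) \<ge> 0" using c0 by simp
    have prodS: "(\<Prod>i=1..Suc k. q i) = q (Suc k) * (\<Prod>i=1..k. q i)"
      by (rule prod.nat_ivl_Suc') simp
    have finS: "finite (S k)" unfolding S_def by auto
    show ?case
    proof (cases "k < d \<and> G k")
      case True
      have eq: "S (Suc k) = insert k (S k)" unfolding S_def using True by auto
      have nk: "k \<notin> S k" unfolding S_def by auto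
      have "A 0 \<le> c ^ card (S k) * (\<Prod>i=1..k. q i) * (c * (q (Suc k) * A (Suc k)))"
        using IH stp(2)[OF k] True cp Pk by (meson order.trans mult_left_mono mult_nonneg_nonneg)
      also have "\<dots> = c ^ card (S (Suc k)) * (\<Prod>i=1..Suc k. q i) * A (Suc k)"
        unfolding eq prodS using finS nk by (simp add: algebra_simps)
      finally show ?thesis .
    next
      case False
      have eq: "S (Suc k) = S k" unfolding S_def using False by (auto simp: less_Suc_eq)
      have "A 0 \<le> c ^ card (S k) * (\<Prod>i=1..k. q i) * (q (Suc k) * A (Suc k))"
        using IH stp(1)[OF k] cp Pk by (meson order.trans mult_left_mono mult_nonneg_nonneg)
      also have "\<dots> = c ^ card (S (Suc k)) * (\<Prod>i=1..Suc k. q i) * A (Suc k)"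
        unfolding eq prodS by (simp add: algebra_simps)
      finally show ?thesis .
    qed
  qed
  have Sd: "S (d+1) = {j. j < d \<and>
           real (card {I\<in>Lambda l L j. s I powr p \<le>
                 (1 - \<mu>) * real (l (j+1)) powr (p - 1) * (\<Sum>J\<in>children l L j I. s J powr p)})
           \<ge> \<Delta> * real (card (Lambda l L j))}" unfolding S_def G_def by auto
  show ?thesis
  proof (rule ccontr)
    assume "\<not> ?thesis"
    hence mlt: "m \<le> card (S (d+1))" using Sd by simp
    define K where "K = (1 - \<nu>/2) * (\<Theta> powr p / lam powr p)"
    define PA where "PA = (\<Prod>i=1..d+1. q i) * A (d+1)"
    have PA0: "PA \<ge> 0" unfolding PA_def using q0 A0 by (intro mult_nonneg_nonneg prod_nonneg) auto
    have "A 0 \<le> c ^ card (S (d+1)) * PA" using ind[of "d+1"] unfolding PA_def by (simp add: mult.assoc)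
    also have "\<dots> \<le> c ^ m * PA"
      using PA0 c0 mlt by (intro mult_right_mono power_decreasing) auto
    also have "\<dots> \<le> K * PA" using iv PA0 unfolding c_def K_def by (intro mult_right_mono) auto
    finally have "A 0 \<le> K * PA" .
    moreover have "A 0 = s {1..L} powr p" unfolding A_def by simp
    ultimately show False using iii unfolding K_def PA_def A_def q_def by (simp add: mult.assoc)
  qed
qed

end
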